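(* Let $\gamma_1,\gamma_2,\gamma_3\in\mathbb{R}$ with $\gamma_1,\gamma_2\ge 0$, and let $\mathcal{L}(X)=\frac12\sum_{k=1}^3\gamma_k(\sigma_kX\sigma_k-X)$ on $\mathcal{M}_2$. If $e^{t\mathcal{L}}$ is a unital Schwarz map for every $t\ge 0$, then $\gamma_1+\gamma_2+4\gamma_3\ge 0$. Equivalently, in terms of $\Gamma_1=\gamma_2+\gamma_3$, $\Gamma_2=\gamma_3+\gamma_1$, $\Gamma_3=\gamma_1+\gamma_2$, one has $\Gamma_1+\Gamma_2\ge\frac12\Gamma_3$.
   Context: $\sigma_1,\sigma_2,\sigma_3$ are the Pauli matrices. A unital Schwarz map on $\mathcal{M}_n$ is a linear map $\Phi$ with $\Phi(\mathbb{1})=\mathbb{1}$ and $\Phi(X^\dagger X)\ge\Phi(X)^\dagger\Phi(X)$ for all $X\in\mathcal{M}_n$. Note that $\mathcal{L}$ is self-dual with respect to the Hilbert–Schmidt inner product, i.e. $\mathcal{L}^\ddagger=\mathcal{L}$. *)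

theory Defs
  imports "HOL-Analysis.Analysis"
begin

type_synonym M2 = "complex^2^2"

definition sigma1 :: M2 where
  "sigma1 = vector [vector [0, 1], vector [1, 0]]"
definition sigma2 :: M2 where
  "sigma2 = vector [vector [0, - \<i>], vector [\<i>, 0]]"
definition sigma3 :: M2 where
  "sigma3 = vector [vector [1, 0], vector [0, -1]]"

definition adj :: "M2 \<Rightarrow> M2" where
  "adj A = (\<chi> i j. cnj (A $ j $ i))"

definition csmult :: "complex \<Rightarrow> M2 \<Rightarrow> M2" where
  "csmult c A = (\<chi> i j. c * A $ i $ j)"

definition psd :: "M2 \<Rightarrow> bool" where
  "psd A \<longleftrightarrow> (\<forall>v :: complex^2.
     let q = (\<Sum>i\<in>UNIV. \<Sum>j\<in>UNIV. cnj (v $ i) * A $ i $ j * v $ j)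
     in Im q = 0 \<and> 0 \<le> Re q)"

definition clinear_map :: "(M2 \<Rightarrow> M2) \<Rightarrow> bool" where
  "clinear_map \<Phi> \<longleftrightarrow> (\<forall>X Y. \<Phi> (X + Y) = \<Phi> X + \<Phi> Y) \<and>
                       (\<forall>c X. \<Phi> (csmult c X) = csmult c (\<Phi> X))"

definition unital_schwarz :: "(M2 \<Rightarrow> M2) \<Rightarrow> bool" where
  "unital_schwarz \<Phi> \<longleftrightarrow> clinear_map \<Phi> \<and> \<Phi> (mat 1) = mat 1 \<and>
     (\<forall>X. psd (\<Phi> (adj X ** X) - adj (\<Phi> X) ** \<Phi> X))"

definition exp_map :: "real \<Rightarrow> (M2 \<Rightarrow> M2) \<Rightarrow> M2 \<Rightarrow> M2" where
  "exp_map t L X = (\<Sum>n. (t ^ n / fact n) *\<^sub>R (L ^^ n) X)"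

definition pauliL :: "real \<Rightarrow> real \<Rightarrow> real \<Rightarrow> M2 \<Rightarrow> M2" where
  "pauliL g1 g2 g3 X = (1/2) *\<^sub>R
     (g1 *\<^sub>R (sigma1 ** X ** sigma1 - X) + g2 *\<^sub>R (sigma2 ** X ** sigma2 - X)
      + g3 *\<^sub>R (sigma3 ** X ** sigma3 - X))"

end

theory Submission imports Defs begin

lemmas mdefs = vec_eq_iff forall_2 matrix_matrix_mult_def sum_2 sigma1_def sigma2_def sigma3_def

lemma L_scale: "pauliL g1 g2 g3 (c *\<^sub>R X) = c *\<^sub>R pauliL g1 g2 g3 X"
  by (simp add: pauliL_def mdefs algebra_simps)

lemma eig1: "pauliL g1 g2 g3 sigma1 = (-(g2+g3)) *\<^sub>R sigma1"
  by (simp add: pauliL_def mdefs complex_eq_iff algebra_simps)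
lemma eig2: "pauliL g1 g2 g3 sigma2 = (-(g1+g3)) *\<^sub>R sigma2"
  by (simp add: pauliL_def mdefs complex_eq_iff algebra_simps)
lemma eig3: "pauliL g1 g2 g3 sigma3 = (-(g1+g2)) *\<^sub>R sigma3"
  by (simp add: pauliL_def mdefs complex_eq_iff algebra_simps)

lemma powL: assumes "pauliL g1 g2 g3 X = l *\<^sub>R X"
  shows "(pauliL g1 g2 g3 ^^ n) X = (l ^ n) *\<^sub>R X"
  by (induction n) (simp_all add: L_scale assms)

lemma expL: assumes "pauliL g1 g2 g3 X = l *\<^sub>R X"
  shows "exp_map t (pauliL g1 g2 g3) X = exp (t * l) *\<^sub>R X"
proof -
  have s: "summable (\<lambda>n. (t*l) ^ n /\<^sub>R fact n)" by (rule summable_exp_generic)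
  have e: "(\<lambda>n. (t*l) ^ n /\<^sub>R fact n) = (\<lambda>n. t ^ n / fact n * l ^ n)"
    by (auto simp: power_mult_distrib divide_inverse)
  have "exp_map t (pauliL g1 g2 g3) X = (\<Sum>n. (t ^ n / fact n * l ^ n) *\<^sub>R X)"
    by (simp add: exp_map_def powL[OF assms])
  also have "\<dots> = (\<Sum>n. t ^ n / fact n * l ^ n) *\<^sub>R X"
    using s e by (simp add: suminf_scaleR_left)
  also have "(\<Sum>n. t ^ n / fact n * l ^ n) = exp (t*l)"
    unfolding exp_def e by (rule refl)
  finally show ?thesis .
qed

lemma X0: "csmult (1/2) (sigma1 + csmult \<i> sigma2) = vector [vector [0,1], vector[0,0]]"
  by (simp add: csmult_def mdefs)
lemma X0X0: "adj (vector [vector [0,1], vector[0,0]]) ** (vector [vector [0,1], vector[0,0]] :: M2)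
   = csmult (1/2) (mat 1 + csmult (-1) sigma3)"
  by (simp add: adj_def csmult_def mdefs mat_def)

lemma entry: 
  fixes a b c :: real
  shows "(let q = (\<Sum>i\<in>UNIV. \<Sum>j\<in>UNIV. cnj ((vector [0,1] :: complex^2) $ i) *
      (csmult (1/2) (mat 1 + csmult (-1) (c *\<^sub>R sigma3)) -
       adj (csmult (1/2) (a *\<^sub>R sigma1 + csmult \<i> (b *\<^sub>R sigma2))) **
        csmult (1/2) (a *\<^sub>R sigma1 + csmult \<i> (b *\<^sub>R sigma2))) $ i $ j * (vector [0,1] :: complex^2) $ j)
     in Im q = 0 \<and> 0 \<le> Re q) \<longleftrightarrow> 0 \<le> (1 + c)/2 - ((a+b)/2)^2"
  by (simp add: adj_def csmult_def mdefs mat_def Let_def power2_eq_square algebra_simps) (simp add: field_simps)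

lemma ineq_t:
  fixes g1 g2 g3 t :: real
  assumes "unital_schwarz (exp_map t (pauliL g1 g2 g3))"
  shows "0 \<le> (1 + exp (t * (-(g1+g2))))/2 - ((exp (t * (-(g2+g3))) + exp (t * (-(g1+g3))))/2)^2"
proof -
  let ?P = "exp_map t (pauliL g1 g2 g3)"
  define a where "a = exp (t * (-(g2+g3)))"
  define b where "b = exp (t * (-(g1+g3)))"
  define c where "c = exp (t * (-(g1+g2)))"
  have lin: "clinear_map ?P" and un: "?P (mat 1) = mat 1"
    and ps: "\<And>X. psd (?P (adj X ** X) - adj (?P X) ** ?P X)"
    using assms unfolding unital_schwarz_def by auto
  have add: "\<And>X Y. ?P (X + Y) = ?P X + ?P Y" and sm: "\<And>c X. ?P (csmult c X) = csmult c (?P X)"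
    using lin unfolding clinear_map_def by auto
  have P1: "?P sigma1 = a *\<^sub>R sigma1" unfolding a_def by (rule expL[OF eig1])
  have P2: "?P sigma2 = b *\<^sub>R sigma2" unfolding b_def by (rule expL[OF eig2])
  have P3: "?P sigma3 = c *\<^sub>R sigma3" unfolding c_def by (rule expL[OF eig3])
  define X where "X = (vector [vector [0,1], vector[0,0]] :: M2)"
  have PX: "?P X = csmult (1/2) (a *\<^sub>R sigma1 + csmult \<i> (b *\<^sub>R sigma2))"
    unfolding X_def X0[symmetric] by (simp add: sm add P1 P2)
  have PXX: "?P (adj X ** X) = csmult (1/2) (mat 1 + csmult (-1) (c *\<^sub>R sigma3))"
    unfolding X_def X0X0 by (simp add: sm add un P3)
  have "psd (?P (adj X ** X) - adj (?P X) ** ?P X)" by (rule ps)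
  hence "let q = (\<Sum>i\<in>UNIV. \<Sum>j\<in>UNIV. cnj ((vector [0,1] :: complex^2) $ i) *
      (?P (adj X ** X) - adj (?P X) ** ?P X) $ i $ j * (vector [0,1] :: complex^2) $ j)
     in Im q = 0 \<and> 0 \<le> Re q" unfolding psd_def by blast
  hence "0 \<le> (1 + c)/2 - ((a+b)/2)^2" unfolding PX PXX entry .
  thus ?thesis unfolding a_def b_def c_def .
qed

theorem mainTheorem3:
  fixes g1 g2 g3 :: real
  assumes "g1 \<ge> 0" and "g2 \<ge> 0"
    and "\<forall>t\<ge>0. unital_schwarz (exp_map t (pauliL g1 g2 g3))"
  shows "g1 + g2 + 4 * g3 \<ge> 0 \<and> (g2 + g3) + (g3 + g1) \<ge> (g1 + g2) / 2"
proof -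
  define f where "f = (\<lambda>t::real. (1 + exp (t * (-(g1+g2))))/2 - ((exp (t * (-(g2+g3))) + exp (t * (-(g1+g3))))/2)^2)"
  have fpos: "\<And>t. t \<ge> 0 \<Longrightarrow> f t \<ge> 0" unfolding f_def using assms(3) ineq_t by blast
  have f0: "f 0 = 0" by (simp add: f_def)
  define l where "l = (-(g1+g2))/2 - 2 * ((1+1)/2) * (((-(g2+g3)) + (-(g1+g3)))/2)"
  have D: "(f has_real_derivative l) (at 0)"
    unfolding f_def l_def
    by (auto intro!: derivative_eq_intros simp: field_simps)
  have "l \<ge> 0"
  proof (rule ccontr)
    assume "\<not> l \<ge> 0"
    then obtain d where d: "d > 0" "\<forall>h>0. h < d \<longrightarrow> f (0 + h) < f 0"
      using DERIV_neg_dec_right[OF D] by force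
    have "f (d/2) < 0" using d f0 by auto
    moreover have "f (d/2) \<ge> 0" using fpos d by auto
    ultimately show False by simp
  qed
  thus ?thesis unfolding l_def by simp
qed

end
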